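(* Let $d\ge1$, for every $S\subseteq\{1,\dots,d\}$ let $\hat p_S$ be a probability density on $\mathbb{R}^S$, and let $\hat m:\mathbb{R}^d\to\mathbb{R}$ be written as $\hat m(x)=\sum_{S\subseteq\{1,\dots,d\}}\hat m^\ast_S(x_S)$ with functions $\hat m^\ast_S:\mathbb{R}^S\to\mathbb{R}$ satisfying, for every $S\subseteq\{1,\dots,d\}$, $$\sum_{T:\ T\cap S\neq\emptyset}\int \hat m^\ast_T(x_T)\,\hat p_S(x_S)\,\mathrm dx_S=0 .$$ For $x_0\in\mathbb{R}^d$ define the value function $v_{x_0}(S)=\left.\int \hat m(x)\,\hat p_{-S}(x_{-S})\,\mathrm dx_{-S}\right|_{x=x_0}$ and the interventional SHAP values $$\phi_k(x_0)=\sum_{S\subseteq\{1,\dots,d\}\setminus\{k\}}\frac{|S|!\,(d-|S|-1)!}{d!}\big(v_{x_0}(S\cup\{k\})-v_{x_0}(S)\big),\qquad k=1,\dots,d.$$ Then for every $k\in\{1,\dots,d\}$ and $x\in\mathbb{R}^d$, $$\phi_k(x)=\sum_{S\subseteq\{1,\dots,d\}:\ k\in S}\frac{1}{|S|}\,\hat m^\ast_S(x_S)=\hat m^\ast_k(x_k)+\frac12\sum_{j\neq k}\hat m^\ast_{kj}(x_{kj})+\cdots+\frac1d\,\hat m^\ast_{1,\dots,d}(x_{1,\dots,d}).$$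
   Context: For $S\subseteq\{1,\dots,d\}$, $x_S=(x_k)_{k\in S}$, $-S=\{1,\dots,d\}\setminus S$, and $\mathrm dx_S$ denotes integration over the coordinates in $S$ (for the empty set the integral is the identity). $\hat m^\ast_\emptyset$ is a constant. All integrals appearing are assumed to exist and be finite. *)

theory Defs
  imports "HOL-Analysis.Analysis"
begin

text \<open>Points of R^S (S a set of coordinate indices) are represented as functions
  nat => real; R^S carries the product Lebesgue measure.\<close>

definition coord_space :: "nat set \<Rightarrow> (nat \<Rightarrow> real) measure" where
  "coord_space S = PiM S (\<lambda>_. lborel)"

definition merge_coords :: "nat set \<Rightarrow> (nat \<Rightarrow> real) \<Rightarrow> (nat \<Rightarrow> real) \<Rightarrow> (nat \<Rightarrow> real)" where
  "merge_coords S y x = (\<lambda>i. if i \<in> S then y i else x i)"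

definition is_prob_density :: "nat set \<Rightarrow> ((nat \<Rightarrow> real) \<Rightarrow> real) \<Rightarrow> bool" where
  "is_prob_density S f \<longleftrightarrow>
     f \<in> borel_measurable (coord_space S) \<and>
     (\<forall>y\<in>space (coord_space S). 0 \<le> f y) \<and>
     integrable (coord_space S) f \<and>
     integral\<^sup>L (coord_space S) f = 1"

definition value_fun :: "nat \<Rightarrow> (nat set \<Rightarrow> (nat \<Rightarrow> real) \<Rightarrow> real) \<Rightarrow> ((nat \<Rightarrow> real) \<Rightarrow> real)
    \<Rightarrow> (nat \<Rightarrow> real) \<Rightarrow> nat set \<Rightarrow> real" where
  "value_fun d p m x0 S =
     (let C = {1..d} - S in
      integral\<^sup>L (coord_space C) (\<lambda>y. m (merge_coords C y x0) * p C y))"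

definition shap :: "nat \<Rightarrow> (nat set \<Rightarrow> (nat \<Rightarrow> real) \<Rightarrow> real) \<Rightarrow> ((nat \<Rightarrow> real) \<Rightarrow> real)
    \<Rightarrow> (nat \<Rightarrow> real) \<Rightarrow> nat \<Rightarrow> real" where
  "shap d p m x0 k =
     (\<Sum>S\<in>Pow ({1..d} - {k}).
        fact (card S) * fact (d - card S - 1) / fact d *
        (value_fun d p m x0 (insert k S) - value_fun d p m x0 S))"

end

theory Submission
  imports Defs
begin

lemma term_step:
  fixes a b r :: nat assumes "b \<le> r"
  shows "fact (a + b) * fact (Suc r - b) / fact (a + Suc r + 1) +
         fact (a + Suc b) * fact (Suc r - Suc b) / fact (a + Suc r + 1)
       = (fact (a + b) * fact (r - b) / fact (a + r + 1) :: real)"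
proof -
  define F :: real where "F = fact (a + b)"
  define G :: real where "G = fact (r - b)"
  define D :: real where "D = fact (a + r + 1)"
  have e1: "fact (Suc r - b) = real (Suc (r - b)) * G" using assms unfolding G_def
    by (simp add: Suc_diff_le)
  have e2: "fact (a + Suc r + 1) = real (Suc (a + r + 1)) * D" unfolding D_def
  proof -
    have "a + Suc r + 1 = Suc (a + r + 1)" by simp
    then show "fact (a + Suc r + 1) = real (Suc (a + r + 1)) * fact (a + r + 1)"
      by (simp only: fact_Suc)
  qed
  have e3: "fact (a + Suc b) = real (Suc (a + b)) * F" unfolding F_def by simp
  have e4: "fact (Suc r - Suc b) = G" unfolding G_def by simp
  have pos: "D > 0" unfolding D_def by simp
  have s: "real (Suc (r - b)) + real (Suc (a + b)) = real (Suc (a + r + 1))" using assms by simp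
  have "F * (real (Suc (r - b)) * G) / (real (Suc (a + r + 1)) * D) +
        real (Suc (a + b)) * F * G / (real (Suc (a + r + 1)) * D)
      = F * G * (real (Suc (r - b)) + real (Suc (a + b))) / (real (Suc (a + r + 1)) * D)"
    by (simp add: add_divide_distrib algebra_simps)
  also have "\<dots> = F * G / D" unfolding s
  proof -
    have "real (Suc (a + r + 1)) \<noteq> 0" by simp
    then show "F * G * real (Suc (a + r + 1)) / (real (Suc (a + r + 1)) * D) = F * G / D"
      by (metis mult.commute mult_divide_mult_cancel_left_if)
  qed
  finally show ?thesis unfolding e1 e2 e3 e4 F_def[symmetric] G_def[symmetric] D_def[symmetric] .
qed

lemma H_const:
  "finite R \<Longrightarrow> (\<Sum>B\<in>Pow R. fact (a + card B) * fact (card R - card B) / fact (a + card R + 1) :: real)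
     = 1 / real (a + 1)"
proof (induction R rule: finite_induct)
  case empty
  then show ?case by (simp add: divide_simps)
next
  case (insert x R)
  have disj: "Pow R \<inter> insert x ` Pow R = {}" using insert by auto
  have inj: "inj_on (insert x) (Pow R)" using insert unfolding inj_on_def by (metis PowD insert_ident subsetD)
  have cR: "card (insert x R) = Suc (card R)" using insert by simp
  have "(\<Sum>B\<in>Pow (insert x R). fact (a + card B) * fact (card (insert x R) - card B) / fact (a + card (insert x R) + 1) :: real)
      = (\<Sum>B\<in>Pow R. fact (a + card B) * fact (Suc (card R) - card B) / fact (a + Suc (card R) + 1))
      + (\<Sum>B\<in>Pow R. fact (a + card (insert x B)) * fact (Suc (card R) - card (insert x B)) / fact (a + Suc (card R) + 1))"
    unfolding Pow_insert cR using insert disj inj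
    by (simp add: sum.union_disjoint sum.reindex)
  also have "\<dots> = (\<Sum>B\<in>Pow R. fact (a + card B) * fact (Suc (card R) - card B) / fact (a + Suc (card R) + 1)
      + fact (a + Suc (card B)) * fact (Suc (card R) - Suc (card B)) / fact (a + Suc (card R) + 1))"
    unfolding sum.distrib
  proof (intro arg_cong2[where f="(+)"] refl sum.cong)
    fix B assume "B \<in> Pow R"
    then have "card (insert x B) = Suc (card B)" using insert
      by (metis PowD card_insert_disjoint finite_subset subsetD)
    then show "fact (a + card (insert x B)) * fact (Suc (card R) - card (insert x B)) / fact (a + Suc (card R) + 1)
       = (fact (a + Suc (card B)) * fact (Suc (card R) - Suc (card B)) / fact (a + Suc (card R) + 1) :: real)" by simp
  qed
  also have "\<dots> = (\<Sum>B\<in>Pow R. fact (a + card B) * fact (card R - card B) / fact (a + card R + 1))"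
  proof (rule sum.cong[OF refl])
    fix B assume "B \<in> Pow R"
    then have "card B \<le> card R" using insert by (simp add: card_mono)
    then show "fact (a + card B) * fact (Suc (card R) - card B) / fact (a + Suc (card R) + 1)
        + fact (a + Suc (card B)) * fact (Suc (card R) - Suc (card B)) / fact (a + Suc (card R) + 1)
        = (fact (a + card B) * fact (card R - card B) / fact (a + card R + 1) :: real)" by (rule term_step)
  qed
  finally show ?case using insert by simp
qed


lemma value_eq:
  fixes d :: nat
    and p :: "nat set \<Rightarrow> (nat \<Rightarrow> real) \<Rightarrow> real"
    and mstar :: "nat set \<Rightarrow> (nat \<Rightarrow> real) \<Rightarrow> real"
    and m :: "(nat \<Rightarrow> real) \<Rightarrow> real"
  assumes dens: "\<And>S. S \<subseteq> {1..d} \<Longrightarrow> is_prob_density S (p S)"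
    and m_decomp: "\<And>x. m x = (\<Sum>T\<in>Pow {1..d}. mstar T (restrict x T))"
    and integrable: "\<And>S T x. S \<subseteq> {1..d} \<Longrightarrow> T \<subseteq> {1..d} \<Longrightarrow>
           integrable (coord_space S) (\<lambda>y. mstar T (restrict (merge_coords S y x) T) * p S y)"
    and ident: "\<And>S x. S \<subseteq> {1..d} \<Longrightarrow>
           (\<Sum>T\<in>{T\<in>Pow {1..d}. T \<inter> S \<noteq> {}}.
              integral\<^sup>L (coord_space S) (\<lambda>y. mstar T (restrict (merge_coords S y x) T) * p S y)) = 0"
    and S: "S \<subseteq> {1..d}"
  shows "value_fun d p m x S = (\<Sum>T\<in>Pow S. mstar T (restrict x T))"
proof -
  define N where "N = {1..d}"
  define C where "C = N - S"
  have fS: "finite S" using S by (rule finite_subset) simp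
  have CN: "C \<subseteq> {1..d}" unfolding C_def N_def by auto
  define I where "I T = integral\<^sup>L (coord_space C) (\<lambda>y. mstar T (restrict (merge_coords C y x) T) * p C y)" for T
  have "value_fun d p m x S = integral\<^sup>L (coord_space C)
      (\<lambda>y. \<Sum>T\<in>Pow N. mstar T (restrict (merge_coords C y x) T) * p C y)"
    unfolding value_fun_def Let_def C_def N_def m_decomp sum_distrib_right by simp
  also have "\<dots> = (\<Sum>T\<in>Pow N. I T)"
    unfolding I_def
  proof (rule Bochner_Integration.integral_sum)
    fix T assume "T \<in> Pow N"
    then show "integrable (coord_space C) (\<lambda>y. mstar T (restrict (merge_coords C y x) T) * p C y)"
      using integrable CN by (auto simp: N_def)
  qed
  also have "Pow N = {T\<in>Pow N. T \<inter> C \<noteq> {}} \<union> Pow S" using S unfolding C_def N_def by auto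
  also have "(\<Sum>T\<in>{T\<in>Pow N. T \<inter> C \<noteq> {}} \<union> Pow S. I T) =
      (\<Sum>T\<in>{T\<in>Pow N. T \<inter> C \<noteq> {}}. I T) + (\<Sum>T\<in>Pow S. I T)"
    by (rule sum.union_disjoint) (use fS in \<open>auto simp: N_def C_def intro: finite_subset[OF _ finite_atLeastAtMost]\<close>)
  also have "(\<Sum>T\<in>{T\<in>Pow N. T \<inter> C \<noteq> {}}. I T) = 0"
    unfolding I_def N_def using ident[OF CN] by simp
  also have "(\<Sum>T\<in>Pow S. I T) = (\<Sum>T\<in>Pow S. mstar T (restrict x T))"
  proof (rule sum.cong[OF refl])
    fix T assume "T \<in> Pow S"
    then have TC: "T \<inter> C = {}" unfolding C_def by auto
    have r: "restrict (merge_coords C y x) T = restrict x T" for y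
      using TC unfolding merge_coords_def restrict_def by (auto intro!: ext)
    have pd: "integral\<^sup>L (coord_space C) (p C) = 1" using dens[OF CN] unfolding is_prob_density_def by auto
    show "I T = mstar T (restrict x T)" unfolding I_def r using pd by simp
  qed
  finally show ?thesis by simp
qed


lemma weight_sum:
  fixes N T :: "nat set" and k d :: nat
  assumes N: "finite N" "card N = d" and T: "T \<subseteq> N" "k \<in> T"
  shows "(\<Sum>S\<in>{S\<in>Pow (N - {k}). T - {k} \<subseteq> S}. fact (card S) * fact (d - card S - 1) / fact d :: real)
    = 1 / real (card T)"
proof -
  define A where "A = T - {k}"
  define R where "R = N - T"
  have fA: "finite A" and fR: "finite R" using N T unfolding A_def R_def by (auto intro: finite_subset)
  have AR: "A \<inter> R = {}" unfolding A_def R_def by auto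
  have cT: "card T = card A + 1" using T N fA unfolding A_def
    by (metis Suc_eq_plus1 card_Diff1_less card_Suc_Diff1 finite_subset)
  have NN: "N = T \<union> R" using T unfolding R_def by auto
  have cN: "d = card A + card R + 1" using N cT fR NN
    by (metis R_def T(1) card_Diff_subset finite_subset add.commute add.left_commute card_mono le_add_diff_inverse)
  have img: "{S\<in>Pow (N - {k}). T - {k} \<subseteq> S} = (\<lambda>B. A \<union> B) ` Pow R"
  proof (rule set_eqI, rule iffI)
    fix S assume "S \<in> {S\<in>Pow (N - {k}). T - {k} \<subseteq> S}"
    then have "S = A \<union> (S - A)" "S - A \<in> Pow R" unfolding A_def R_def by auto
    then show "S \<in> (\<lambda>B. A \<union> B) ` Pow R" by blast
  next
    fix S assume "S \<in> (\<lambda>B. A \<union> B) ` Pow R"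
    then show "S \<in> {S\<in>Pow (N - {k}). T - {k} \<subseteq> S}" using T unfolding A_def R_def by auto
  qed
  have inj: "inj_on (\<lambda>B. A \<union> B) (Pow R)"
    unfolding inj_on_def using AR by blast
  have "(\<Sum>S\<in>{S\<in>Pow (N - {k}). T - {k} \<subseteq> S}. fact (card S) * fact (d - card S - 1) / fact d :: real)
      = (\<Sum>B\<in>Pow R. fact (card (A \<union> B)) * fact (d - card (A \<union> B) - 1) / fact d)"
    unfolding img by (simp add: sum.reindex[OF inj])
  also have "\<dots> = (\<Sum>B\<in>Pow R. fact (card A + card B) * fact (card R - card B) / fact (card A + card R + 1))"
  proof (rule sum.cong[OF refl])
    fix B assume B: "B \<in> Pow R"
    then have "card (A \<union> B) = card A + card B" using AR fA fR
      by (metis PowD card_Un_disjoint disjoint_iff finite_subset subsetD)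
    then show "fact (card (A \<union> B)) * fact (d - card (A \<union> B) - 1) / fact d
      = (fact (card A + card B) * fact (card R - card B) / fact (card A + card R + 1) :: real)"
      using cN by simp
  qed
  also have "\<dots> = 1 / real (card A + 1)" by (rule H_const[OF fR])
  finally show ?thesis using cT by simp
qed


theorem corollary2:
  fixes d :: nat
    and p :: "nat set \<Rightarrow> (nat \<Rightarrow> real) \<Rightarrow> real"
    and mstar :: "nat set \<Rightarrow> (nat \<Rightarrow> real) \<Rightarrow> real"
    and m :: "(nat \<Rightarrow> real) \<Rightarrow> real"
  assumes d_pos: "d \<ge> 1"
    and dens: "\<And>S. S \<subseteq> {1..d} \<Longrightarrow> is_prob_density S (p S)"
    and m_decomp: "\<And>x. m x = (\<Sum>T\<in>Pow {1..d}. mstar T (restrict x T))"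
    and integrable: "\<And>S T x. S \<subseteq> {1..d} \<Longrightarrow> T \<subseteq> {1..d} \<Longrightarrow>
           integrable (coord_space S) (\<lambda>y. mstar T (restrict (merge_coords S y x) T) * p S y)"
    and ident: "\<And>S x. S \<subseteq> {1..d} \<Longrightarrow>
           (\<Sum>T\<in>{T\<in>Pow {1..d}. T \<inter> S \<noteq> {}}.
              integral\<^sup>L (coord_space S) (\<lambda>y. mstar T (restrict (merge_coords S y x) T) * p S y)) = 0"
    and k: "k \<in> {1..d}"
  shows "shap d p m x k = (\<Sum>S\<in>{S\<in>Pow {1..d}. k \<in> S}. mstar S (restrict x S) / real (card S))"
proof -
  define N where "N = {1..d::nat}"
  define K where "K = {T\<in>Pow N. k \<in> T}"
  define g where "g T = mstar T (restrict x T)" for T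
  define w where "w S = fact (card S) * fact (d - card S - 1) / (fact d :: real)" for S :: "nat set"
  have fN: "finite N" unfolding N_def by simp
  have fK: "finite K" unfolding K_def using fN by simp
  have v: "value_fun d p m x S = (\<Sum>T\<in>Pow S. mstar T (restrict x T))" if "S \<subseteq> {1..d}" for S
    by (rule value_eq[where p=p and mstar=mstar and m=m, OF _ _ _ _ that])
       (fact dens, fact m_decomp, fact integrable, fact ident)
  have diff: "value_fun d p m x (insert k S) - value_fun d p m x S
      = (\<Sum>T\<in>K. if T - {k} \<subseteq> S then g T else 0)" if S: "S \<in> Pow (N - {k})" for S
  proof -
    have S1: "S \<subseteq> {1..d}" and S2: "insert k S \<subseteq> {1..d}" and kS: "k \<notin> S"
      using S k unfolding N_def by auto
    have fS: "finite S" using S1 by (rule finite_subset) simp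
    have PU: "Pow (insert k S) = Pow S \<union> {T\<in>K. T - {k} \<subseteq> S}"
      using S k unfolding K_def N_def by auto
    have "(\<Sum>T\<in>Pow (insert k S). g T) = (\<Sum>T\<in>Pow S. g T) + (\<Sum>T\<in>{T\<in>K. T - {k} \<subseteq> S}. g T)"
      unfolding PU by (rule sum.union_disjoint) (use fS fK kS in \<open>auto simp: K_def\<close>, use fK in \<open>auto simp: K_def intro: finite_subset[OF _ fK]\<close>)
    then show ?thesis unfolding v[OF S1] v[OF S2] g_def[symmetric]
      by (simp add: sum.inter_filter[OF fK])
  qed
  have "shap d p m x k = (\<Sum>S\<in>Pow (N - {k}). w S * (\<Sum>T\<in>K. if T - {k} \<subseteq> S then g T else 0))"
    unfolding shap_def N_def[symmetric] w_def by (rule sum.cong[OF refl]) (simp add: diff)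
  also have "\<dots> = (\<Sum>S\<in>Pow (N - {k}). \<Sum>T\<in>K. g T * (if T - {k} \<subseteq> S then w S else 0))"
    by (simp add: sum_distrib_left if_distrib mult.commute cong: if_cong)
  also have "\<dots> = (\<Sum>T\<in>K. \<Sum>S\<in>Pow (N - {k}). g T * (if T - {k} \<subseteq> S then w S else 0))"
    by (rule sum.swap)
  also have "\<dots> = (\<Sum>T\<in>K. g T * (\<Sum>S\<in>{S\<in>Pow (N - {k}). T - {k} \<subseteq> S}. w S))"
  proof (rule sum.cong[OF refl])
    fix T
    have "(\<Sum>S\<in>{S\<in>Pow (N - {k}). T - {k} \<subseteq> S}. w S) = (\<Sum>S\<in>Pow (N - {k}). if T - {k} \<subseteq> S then w S else 0)"
      by (rule sum.inter_filter) (use fN in simp)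
    then show "(\<Sum>S\<in>Pow (N - {k}). g T * (if T - {k} \<subseteq> S then w S else 0)) =
      g T * (\<Sum>S\<in>{S\<in>Pow (N - {k}). T - {k} \<subseteq> S}. w S)" by (simp add: sum_distrib_left)
  qed
  also have "\<dots> = (\<Sum>T\<in>K. g T / real (card T))"
  proof (rule sum.cong[OF refl])
    fix T assume "T \<in> K"
    then have "T \<subseteq> N" "k \<in> T" unfolding K_def by auto
    then have "(\<Sum>S\<in>{S\<in>Pow (N - {k}). T - {k} \<subseteq> S}. w S) = 1 / real (card T)"
      unfolding w_def by (intro weight_sum[OF fN]) (auto simp: N_def)
    then show "g T * (\<Sum>S\<in>{S\<in>Pow (N - {k}). T - {k} \<subseteq> S}. w S) = g T / real (card T)" by simp
  qed
  finally show ?thesis unfolding K_def N_def g_def .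
qed

end
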